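(* Let $n\ge1$, $\epsilon>0$, $\delta>0$ be arbitrary. For every $C>0$ the open subset $B(\epsilon)\times\mathbb D_{<\delta}(T^*\mathbb T^n)$ of $(\mathbb R^3\times T^*\mathbb T^n,\ker(\alpha_{\mathrm{OT}}+\lambda_{\mathrm{can}}))$ contains an embedded hypersurface $$S_C=\mathbb D^2_{\le\pi}\times\Bigl\{(s_1,\dots,s_n;t_1,\dots,t_n)\in\mathbb R^{2n}\ \Bigm|\ |s_j|<C,\ |t_j|<\tfrac{\delta}{2\sqrt n}\text{ for all }j\Bigr\}$$ on which the contact structure induces the singular distribution $\ker\bigl(r\sin r\,d\vartheta-\sum_{j=1}^n t_j\,ds_j\bigr)$, with $(r,\vartheta)$ polar coordinates on the disk.
   Context: $\alpha_{\mathrm{OT}}=\cos r\,dz+r\sin r\,d\vartheta$ on $\mathbb R^3$ in cylindrical coordinates $(r,\vartheta,z)$. Fix a small $\delta_0>0$ and set $B(h)=\mathbb D^2_{<\pi+\delta_0}\times(-h,h)$. On $T^*\mathbb T^n$ use coordinates $(q_1,\dots,q_n;p_1,\dots,p_n)$ with $q_j\in\mathbb R/2\pi\mathbb Z$, $\lambda_{\mathrm{can}}=-\sum_j p_j\,dq_j$, and $\mathbb D_{<\delta}(T^*\mathbb T^n)=\{\|\mathbf p\|<\delta\}$ with the Euclidean norm of $\mathbf p=(p_1,\dots,p_n)$. The induced singular distribution of an embedding $\iota$ is $(D\iota)^{-1}(\xi)$. *)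

theory Defs
  imports "HOL-Analysis.Analysis"
begin

fun Ck_on :: "nat \<Rightarrow> 'a::euclidean_space set \<Rightarrow> ('a \<Rightarrow> 'b::euclidean_space) \<Rightarrow> bool" where
  "Ck_on 0 U f = continuous_on U f"
| "Ck_on (Suc k) U f =
     (f differentiable_on U \<and> (\<forall>v. Ck_on k U (\<lambda>x. frechet_derivative f (at x) v)))"

definition smooth_on :: "'a::euclidean_space set \<Rightarrow> ('a \<Rightarrow> 'b::euclidean_space) \<Rightarrow> bool" where
  "smooth_on U f \<longleftrightarrow> (\<forall>k. Ck_on k U f)"

definition sinc :: "real \<Rightarrow> real" where
  "sinc r = (if r = 0 then 1 else sin r / r)"

(* Points of R^3 x T^*T^n are represented through the universal cover
   R^3 x R^n x R^n: ((x,y,z),(q,p)) with q the lifted angle coordinates. *)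
type_synonym 'n amb = "(real \<times> real \<times> real) \<times> ((real^'n) \<times> (real^'n))"
(* Points of the hypersurface: ((u,w),(s,t)), (u,w) Cartesian coordinates on the disk *)
type_synonym 'n hyp = "(real \<times> real) \<times> ((real^'n) \<times> (real^'n))"

(* covering map R^n -> T^n = (R/2piZ)^n, realised in (S^1)^n inside C^n *)
definition tor :: "real^'n \<Rightarrow> complex^'n" where
  "tor q = (\<chi> j. cis (q $ j))"

definition proj_amb :: "'n amb \<Rightarrow> (real \<times> real \<times> real) \<times> ((complex^'n) \<times> (real^'n))" where
  "proj_amb P = (case P of ((x,y,z),(q,p)) \<Rightarrow> ((x,y,z),(tor q, p)))"

(* alpha_OT + lambda_can at point P applied to tangent vector V;
   r sin r d\<theta> = (sin r / r)(x dy - y dx) in Cartesian coordinates *)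
definition alpha :: "('n::finite) amb \<Rightarrow> 'n amb \<Rightarrow> real" where
  "alpha P V = (case P of ((x,y,z),(q,p)) \<Rightarrow> case V of ((dx,dy,dz),(dq,dp)) \<Rightarrow>
     (let r = sqrt (x^2 + y^2) in
       cos r * dz + sinc r * (x * dy - y * dx) - (\<Sum>j\<in>UNIV. p $ j * dq $ j)))"

definition beta :: "('n::finite) hyp \<Rightarrow> 'n hyp \<Rightarrow> real" where
  "beta P V = (case P of ((u,w),(s,t)) \<Rightarrow> case V of ((du,dw),(ds,dt)) \<Rightarrow>
     (let r = sqrt (u^2 + w^2) in
       sinc r * (u * dw - w * du) - (\<Sum>j\<in>UNIV. t $ j * ds $ j)))"

definition S_C :: "real \<Rightarrow> real \<Rightarrow> ('n::finite) hyp set" where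
  "S_C C \<delta> = {((u,w),(s,t)). u^2 + w^2 \<le> pi^2 \<and>
      (\<forall>j. \<bar>s $ j\<bar> < C \<and> \<bar>t $ j\<bar> < \<delta> / (2 * sqrt (real CARD('n))))}"

definition target :: "real \<Rightarrow> real \<Rightarrow> real \<Rightarrow> ('n::finite) amb set" where
  "target \<delta>\<^sub>0 \<epsilon> \<delta> = {((x,y,z),(q,p)). x^2 + y^2 < (pi + \<delta>\<^sub>0)^2 \<and> \<bar>z\<bar> < \<epsilon> \<and> norm p < \<delta>}"

end

theory Submission
  imports Defs
begin


definition c0 :: "nat \<Rightarrow> real" where "c0 n = (-1)^n / fact (2*n)"
definition Cm :: "nat \<Rightarrow> real \<Rightarrow> real" where "Cm m y = (\<Sum>n. (diffs ^^ m) c0 n * y^n)"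

lemma c0_summable: "summable (\<lambda>n. c0 n * y^n)"
proof (rule summable_comparison_test')
  show "summable (\<lambda>n. inverse (fact n) * \<bar>y\<bar>^n)" by (rule summable_exp)
  fix n :: nat
  have "fact n \<le> (fact (2*n) :: real)" by (intro fact_mono) auto
  hence "\<bar>y\<bar>^n / fact (2*n) \<le> \<bar>y\<bar>^n / fact n"
    by (intro divide_left_mono) auto
  thus "norm (c0 n * y^n) \<le> inverse (fact n) * \<bar>y\<bar>^n"
    by (simp add: c0_def abs_mult power_abs divide_inverse mult.commute)
qed

lemma Cm_summable: "summable (\<lambda>n. (diffs ^^ m) c0 n * y^n)"
proof (induction m arbitrary: y)
  case 0 thus ?case using c0_summable by simp
next
  case (Suc m) thus ?case using termdiff_converges_all[of "(diffs ^^ m) c0"] by simp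
qed

lemma Cm_deriv: "(Cm m has_field_derivative Cm (Suc m) x) (at x)"
  unfolding Cm_def[abs_def]
  using termdiffs_strong_converges_everywhere[of "(diffs ^^ m) c0", OF Cm_summable] by simp

lemma C0_cos: assumes "0 \<le> y" shows "Cm 0 y = cos (sqrt y)"
proof -
  have "(\<lambda>n. (- 1) ^ n / (fact (2 * n)) * (sqrt y) ^ (2 * n)) sums cos (sqrt y)" by (rule cos_paired)
  moreover have "(sqrt y) ^ (2 * n) = y ^ n" for n
    by (simp add: power_mult assms)
  ultimately have "(\<lambda>n. c0 n * y^n) sums cos (sqrt y)" by (simp add: c0_def)
  thus ?thesis by (simp add: Cm_def sums_unique[symmetric])
qed



definition rho :: "('n::finite) hyp \<Rightarrow> real" where
  "rho x = (fst (fst x))^2 + (snd (fst x))^2"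

definition rho' :: "('n::finite) hyp \<Rightarrow> 'n hyp \<Rightarrow> real" where
  "rho' x v = 2 * fst (fst x) * fst (fst v) + 2 * snd (fst x) * snd (fst v)"

lemma bl_rho': "bounded_linear (\<lambda>x. rho' x v)"
proof -
  have "rho' x v = fst (fst x) * (2 * fst (fst v)) + snd (fst x) * (2 * snd (fst v))" for x
    unfolding rho'_def by simp
  moreover have "bounded_linear (\<lambda>x. fst (fst x) * (2 * fst (fst v)) + snd (fst x) * (2 * snd (fst v)))"
    by (intro bounded_linear_add bounded_linear_compose[OF bounded_linear_mult_left]
      bounded_linear_compose[OF bounded_linear_fst bounded_linear_fst]
      bounded_linear_compose[OF bounded_linear_snd bounded_linear_fst])
  ultimately show ?thesis by simp
qed

lemma rho_deriv: "(rho has_derivative rho' x) (at x)"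
  unfolding rho_def[abs_def] rho'_def[abs_def]
  by (auto intro!: derivative_eq_intros simp: algebra_simps)

lemma Crho_deriv: "((\<lambda>x. Cm m (rho x)) has_derivative (\<lambda>v. Cm (Suc m) (rho x) * rho' x v)) (at x)"
  using has_derivative_compose[OF rho_deriv Cm_deriv[unfolded has_field_derivative_def]] .

inductive_set G :: "(('n::finite) hyp \<Rightarrow> real) set" where
  G_const: "(\<lambda>x. c) \<in> G"
| G_lin: "bounded_linear l \<Longrightarrow> l \<in> G"
| G_C: "(\<lambda>x. Cm m (rho x)) \<in> G"
| G_add: "f \<in> G \<Longrightarrow> g \<in> G \<Longrightarrow> (\<lambda>x. f x + g x) \<in> G"
| G_mult: "f \<in> G \<Longrightarrow> g \<in> G \<Longrightarrow> (\<lambda>x. f x * g x) \<in> G"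

lemma G_deriv: "g \<in> G \<Longrightarrow> \<exists>g'. (\<forall>x. (g has_derivative g' x) (at x)) \<and> (\<forall>v. (\<lambda>x. g' x v) \<in> G)"
proof (induction rule: G.induct)
  case (G_const c)
  show ?case by (rule exI[of _ "\<lambda>x v. 0"]) (auto intro: G.G_const)
next
  case (G_lin l)
  show ?case by (rule exI[of _ "\<lambda>x. l"]) (auto intro: G.G_const bounded_linear_imp_has_derivative G_lin)
next
  case (G_C m)
  show ?case
    by (rule exI[of _ "\<lambda>x v. Cm (Suc m) (rho x) * rho' x v"])
       (intro conjI allI Crho_deriv G.G_mult[OF G.G_C G.G_lin[OF bl_rho']])
next
  case (G_add f g)
  then obtain f' g' where f: "\<forall>x. (f has_derivative f' x) (at x)" "\<forall>v. (\<lambda>x. f' x v) \<in> G"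
    and g: "\<forall>x. (g has_derivative g' x) (at x)" "\<forall>v. (\<lambda>x. g' x v) \<in> G" by blast
  show ?case
    by (rule exI[of _ "\<lambda>x v. f' x v + g' x v"]) (use f g in \<open>auto intro: has_derivative_add G.G_add\<close>)
next
  case (G_mult f g)
  then obtain f' g' where f: "\<forall>x. (f has_derivative f' x) (at x)" "\<forall>v. (\<lambda>x. f' x v) \<in> G"
    and g: "\<forall>x. (g has_derivative g' x) (at x)" "\<forall>v. (\<lambda>x. g' x v) \<in> G" by blast
  show ?case
  proof (intro exI[of _ "\<lambda>x v. f x * g' x v + f' x v * g x"] conjI allI)
    fix x show "((\<lambda>x. f x * g x) has_derivative (\<lambda>v. f x * g' x v + f' x v * g x)) (at x)"
      using f g by (blast intro: has_derivative_mult)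
  next
    fix v show "(\<lambda>x. f x * g' x v + f' x v * g x) \<in> G"
      using G.G_add[OF G.G_mult[OF \<open>f \<in> G\<close> g(2)[rule_format, of v]]
                       G.G_mult[OF f(2)[rule_format, of v] \<open>g \<in> G\<close>]] by simp
  qed
qed

definition Fcl :: "(('n::finite) hyp \<Rightarrow> 'n amb) set" where
  "Fcl = {h. \<exists>c L g e. bounded_linear L \<and> g \<in> G \<and> h = (\<lambda>x. c + L x + g x *\<^sub>R e)}"

lemma Fcl_step: assumes "h \<in> Fcl"
  shows "h differentiable_on UNIV \<and> (\<forall>v. (\<lambda>x. frechet_derivative h (at x) v) \<in> Fcl)"
proof -
  obtain c L g e where L: "bounded_linear L" and g: "g \<in> G" and h: "h = (\<lambda>x. c + L x + g x *\<^sub>R e)"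
    using assms unfolding Fcl_def by blast
  obtain g' where g': "\<forall>x. (g has_derivative g' x) (at x)" "\<forall>v. (\<lambda>x. g' x v) \<in> G"
    using G_deriv[OF g] by blast
  have hd: "(h has_derivative (\<lambda>v. L v + g' x v *\<^sub>R e)) (at x)" for x
    unfolding h using g'(1)[rule_format, of x]
    by (auto intro!: derivative_eq_intros bounded_linear_imp_has_derivative[OF L])
  have fd: "frechet_derivative h (at x) = (\<lambda>v. L v + g' x v *\<^sub>R e)" for x
    using frechet_derivative_at[OF hd] by simp
  have "(\<lambda>x. frechet_derivative h (at x) v) \<in> Fcl" for v
  proof -
    have "bounded_linear (\<lambda>x::('n::finite) hyp. 0::'n amb)" by (rule bounded_linear_zero)
    moreover have "(\<lambda>x. g' x v) \<in> G" using g'(2) by blast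
    moreover have "(\<lambda>x. frechet_derivative h (at x) v) = (\<lambda>x. L v + (\<lambda>x. 0) x + g' x v *\<^sub>R e)"
      unfolding fd by simp
    ultimately show ?thesis unfolding Fcl_def by blast
  qed
  moreover have "h differentiable_on UNIV"
    using hd unfolding differentiable_on_def differentiable_def by blast
  ultimately show ?thesis by blast
qed

lemma Ck_class:
  assumes "\<And>h. h \<in> F \<Longrightarrow> h differentiable_on U \<and> (\<forall>v. (\<lambda>x. frechet_derivative h (at x) v) \<in> F)"
  shows "h \<in> F \<Longrightarrow> Ck_on k U h"
proof (induction k arbitrary: h)
  case 0 thus ?case using assms differentiable_imp_continuous_on by auto
next
  case (Suc k) thus ?case using assms by auto
qed

lemma Fcl_smooth: "h \<in> Fcl \<Longrightarrow> smooth_on UNIV h"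
  unfolding smooth_on_def using Ck_class[of Fcl UNIV, OF Fcl_step] by blast



definition Lmap :: "real^'n \<Rightarrow> ('n::finite) hyp \<Rightarrow> 'n amb" where
  "Lmap a x = ((fst (fst x), snd (fst x), a \<bullet> fst (snd x)), (fst (snd x), snd (snd x)))"
definition ee :: "real^'n \<Rightarrow> ('n::finite) amb" where "ee a = ((0,0,0),(0,a))"
definition iota :: "real^'n \<Rightarrow> ('n::finite) hyp \<Rightarrow> 'n amb" where
  "iota a x = ((fst (fst x), snd (fst x), a \<bullet> fst (snd x)), (fst (snd x), snd (snd x) + Cm 0 (rho x) *\<^sub>R a))"

lemma iota_eq: "iota a = (\<lambda>x. 0 + Lmap a x + Cm 0 (rho x) *\<^sub>R ee a)"
  by (auto simp: iota_def Lmap_def ee_def fun_eq_iff)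

lemma bl_L: "bounded_linear (Lmap a)"
proof -
  have "linear (Lmap a)"
    by (rule linearI) (auto simp: Lmap_def inner_add_right algebra_simps)
  thus ?thesis by (simp add: linear_conv_bounded_linear)
qed

lemma iota_smooth: "smooth_on UNIV (iota a)"
proof (rule Fcl_smooth)
  have "bounded_linear (Lmap a)" "(\<lambda>x. Cm 0 (rho x)) \<in> G" by (rule bl_L, rule G.G_C)
  thus "iota a \<in> Fcl" unfolding Fcl_def iota_eq by blast
qed

lemma iota_deriv: "(iota a has_derivative (\<lambda>v. Lmap a v + (Cm 1 (rho x) * rho' x v) *\<^sub>R ee a)) (at x)"
  unfolding iota_eq
  using Crho_deriv[of 0 x] bounded_linear_imp_has_derivative[OF bl_L]
  by (auto intro!: derivative_eq_intros)

lemma iota_fd: "frechet_derivative (iota a) (at x) = (\<lambda>v. Lmap a v + (Cm 1 (rho x) * rho' x v) *\<^sub>R ee a)"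
  using frechet_derivative_at[OF iota_deriv[of a x]] by simp

lemma iota_fd_inj: "inj (frechet_derivative (iota a) (at x))"
proof (rule injI)
  fix v1 v2 assume "frechet_derivative (iota a) (at x) v1 = frechet_derivative (iota a) (at x) v2"
  thus "v1 = v2"
    by (cases v1; cases v2) (auto simp: iota_fd Lmap_def ee_def rho'_def)
qed

lemma iota_alpha: "alpha (iota a x) (frechet_derivative (iota a) (at x) v) = beta x v"
proof -
  obtain u w s t where x: "x = ((u,w),(s,t))" by (metis prod.collapse)
  obtain du dw ds dt where v: "v = ((du,dw),(ds,dt))" by (metis prod.collapse)
  have c: "Cm 0 (u^2 + w^2) = cos (sqrt (u^2+w^2))" by (rule C0_cos) simp
  show ?thesis
    by (simp add: x v iota_fd iota_def Lmap_def ee_def alpha_def beta_def rho_def c Let_def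
        inner_vec_def sum.distrib sum_distrib_left sum_distrib_right algebra_simps)
qed



lemma geo: fixes K N :: int assumes "0 \<le> K" "K+1 \<le> N" shows "K * (\<Sum>i<M. N^i) < N^M"
proof (induction M)
  case 0 thus ?case by simp
next
  case (Suc M)
  have N0: "0 \<le> N^M" using assms by simp
  have "K * (\<Sum>i<Suc M. N^i) = K * (\<Sum>i<M. N^i) + K * N^M" by (simp add: algebra_simps)
  also have "\<dots> < N^M + K * N^M" using Suc by simp
  also have "\<dots> = (K+1) * N^M" by (simp add: algebra_simps)
  also have "\<dots> \<le> N * N^M" using assms N0 by (intro mult_right_mono) auto
  finally show ?case by simp
qed

lemma digits:
  fixes k :: "'n::finite \<Rightarrow> int" and f :: "'n \<Rightarrow> nat"
  assumes inj: "inj f" and kb: "\<forall>j. \<bar>k j\<bar> \<le> K" and K0: "0 \<le> K" and KN: "K+1 \<le> N"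
    and sum0: "(\<Sum>j\<in>UNIV. k j * N^f j) = 0"
  shows "k j = 0"
proof (rule ccontr)
  assume "k j \<noteq> 0"
  define J where "J = {j. k j \<noteq> 0}"
  have jJ: "j \<in> J" using \<open>k j \<noteq> 0\<close> by (simp add: J_def)
  have finJ: "finite J" by simp
  define M where "M = Max (f ` J)"
  have "M \<in> f ` J" unfolding M_def using jJ by (intro Max_in) auto
  then obtain j0 where j0: "j0 \<in> J" "f j0 = M" by auto
  have Mge: "f i \<le> M" if "i \<in> J" for i unfolding M_def using that by (intro Max_ge) auto
  have N1: "1 \<le> N" using K0 KN by simp
  have "(\<Sum>j\<in>UNIV. k j * N^f j) = (\<Sum>j\<in>J. k j * N^f j)"
    by (rule sum.mono_neutral_right) (auto simp: J_def)
  also have "\<dots> = k j0 * N^M + (\<Sum>j\<in>J-{j0}. k j * N^f j)"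
    using j0 finJ by (simp add: sum.remove)
  finally have eq: "k j0 * N^M = - (\<Sum>j\<in>J-{j0}. k j * N^f j)" using sum0 by simp
  have "\<bar>\<Sum>j\<in>J-{j0}. k j * N^f j\<bar> \<le> (\<Sum>j\<in>J-{j0}. \<bar>k j * N^f j\<bar>)" by (rule sum_abs)
  also have "\<dots> \<le> (\<Sum>j\<in>J-{j0}. K * N^f j)"
    by (intro sum_mono) (use kb N1 in \<open>auto simp: abs_mult intro!: mult_right_mono\<close>)
  also have "\<dots> = K * (\<Sum>i\<in>f`(J-{j0}). N^i)"
    by (simp add: sum_distrib_left sum.reindex inj_on_subset[OF inj])
  also have "\<dots> \<le> K * (\<Sum>i<M. N^i)"
  proof -
    have sub: "f`(J-{j0}) \<subseteq> {..<M}"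
    proof
      fix i assume "i \<in> f`(J-{j0})"
      then obtain j' where j': "j' \<in> J" "j' \<noteq> j0" "i = f j'" by auto
      have "f j' \<noteq> f j0" using j' inj by (auto dest: injD)
      thus "i \<in> {..<M}" using Mge[OF j'(1)] j' j0 by auto
    qed
    show ?thesis using K0 N1 by (intro mult_left_mono sum_mono2 sub) auto
  qed
  also have "\<dots> < N^M" by (rule geo[OF K0 KN])
  also have "\<dots> \<le> \<bar>k j0\<bar> * N^M"
    using j0 N1 by (auto simp: J_def intro!: mult_right_mono)
  finally have "\<bar>k j0 * N^M\<bar> < \<bar>k j0\<bar> * N^M" using eq by simp
  thus False using N1 by (simp add: abs_mult)
qed



lemma proj_iota: "(proj_amb \<circ> iota a) x =
  ((fst (fst x), snd (fst x), a \<bullet> fst (snd x)), (tor (fst (snd x)), snd (snd x) + Cm 0 (rho x) *\<^sub>R a))"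
  by (simp add: proj_amb_def iota_def split: prod.splits)

lemma cont_proj_iota: "continuous_on UNIV (proj_amb \<circ> iota a)"
proof -
  have c: "continuous_on UNIV (\<lambda>x. Cm 0 (rho x))"
    by (intro continuous_at_imp_continuous_on ballI has_derivative_continuous[OF Crho_deriv])
  show ?thesis unfolding proj_iota[abs_def] tor_def
    by (intro continuous_intros c)
qed

lemma inj_proj_iota:
  fixes f :: "'n::finite \<Rightarrow> nat" and K :: int
  assumes a: "a = (\<chi> j. \<eta> * real_of_int (K+1) ^ f j)" and eta: "\<eta> > 0" and inj: "inj f"
    and K0: "0 \<le> K" and CK: "C \<le> pi * K"
  shows "inj_on (proj_amb \<circ> iota a) {x. \<forall>j. \<bar>fst (snd x) $ j\<bar> \<le> C}"
proof (rule inj_onI)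
  fix x y :: "'n hyp"
  assume x: "x \<in> {x. \<forall>j. \<bar>fst (snd x) $ j\<bar> \<le> C}" and y: "y \<in> {x. \<forall>j. \<bar>fst (snd x) $ j\<bar> \<le> C}"
    and eq: "(proj_amb \<circ> iota a) x = (proj_amb \<circ> iota a) y"
  obtain u w s t where xx: "x = ((u,w),(s,t))" by (metis prod.collapse)
  obtain u' w' s' t' where yy: "y = ((u',w'),(s',t'))" by (metis prod.collapse)
  from eq[unfolded proj_iota xx yy] have e1: "u = u'" "w = w'" "a \<bullet> s = a \<bullet> s'" "tor s = tor s'"
    and tt: "t = t'"
    by (auto simp: rho_def)
  have "\<forall>j. \<exists>n::int. s $ j = s' $ j + 2 * pi * n"
  proof
    fix j
    have "cis (s $ j) = cis (s' $ j)" using e1(4) unfolding tor_def by (metis vec_lambda_beta)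
    hence "sin (s $ j) = sin (s' $ j) \<and> cos (s $ j) = cos (s' $ j)"
      by (simp add: complex_eq_iff)
    thus "\<exists>n::int. s $ j = s' $ j + 2 * pi * n" by (simp add: sin_cos_eq_iff)
  qed
  then obtain k :: "'n \<Rightarrow> int" where k: "\<And>j. s $ j = s' $ j + 2 * pi * k j" by metis
  have kb: "\<forall>j. \<bar>k j\<bar> \<le> K"
  proof
    fix j
    have "\<bar>2 * pi * k j\<bar> \<le> 2 * C" using x y k[of j] by (simp add: xx yy) (smt (verit) \<open>\<And>j. s $ j = s' $ j + 2 * pi * real_of_int (k j)\<close>)
    hence "pi * \<bar>real_of_int (k j)\<bar> \<le> C" by (simp add: abs_mult)
    hence "pi * \<bar>real_of_int (k j)\<bar> \<le> pi * K" using CK by linarith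
    hence "\<bar>real_of_int (k j)\<bar> \<le> real_of_int K" using pi_gt_zero mult_le_cancel_left_pos by blast
    thus "\<bar>k j\<bar> \<le> K" by linarith
  qed
  have "0 = a \<bullet> s - a \<bullet> s'" using e1 by simp
  also have "\<dots> = (\<Sum>j\<in>UNIV. \<eta> * real_of_int (K+1) ^ f j * (2 * pi * k j))"
    by (simp add: a inner_vec_def k sum_subtractf[symmetric] algebra_simps)
  also have "\<dots> = (2 * pi * \<eta>) * real_of_int (\<Sum>j\<in>UNIV. k j * (K+1) ^ f j)"
    by (simp add: sum_distrib_left algebra_simps)
  finally have "0 = (2 * pi * \<eta>) * real_of_int (\<Sum>j\<in>UNIV. k j * (K+1) ^ f j)" .
  hence "real_of_int (\<Sum>j\<in>UNIV. k j * (K+1) ^ f j) = 0" using eta pi_gt_zero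
    by (metis mult_eq_0_iff pi_neq_zero zero_neq_numeral less_irrefl)
  hence "(\<Sum>j\<in>UNIV. k j * (K+1) ^ f j) = 0" using of_int_eq_0_iff by blast
  hence "k j = 0" for j by (intro digits[OF inj kb K0]) auto
  hence "s = s'" using k by (simp add: vec_eq_iff)
  thus "x = y" using xx yy e1 tt by simp
qed



lemma compact_disk: "compact {p::real\<times>real. fst p^2 + snd p^2 \<le> pi^2}"
proof -
  have "closed {p::real\<times>real. fst p^2 + snd p^2 \<le> pi^2}"
    by (intro closed_Collect_le continuous_intros)
  moreover have "bounded {p::real\<times>real. fst p^2 + snd p^2 \<le> pi^2}"
  proof -
    have "norm p \<le> pi" if "fst p^2 + snd p^2 \<le> pi^2" for p :: "real\<times>real"
    proof -
      have "norm p = sqrt (fst p^2 + snd p^2)" by (simp add: norm_prod_def)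
      also have "\<dots> \<le> sqrt (pi^2)" using that by (rule real_sqrt_le_mono)
      finally show ?thesis by simp
    qed
    thus ?thesis unfolding bounded_iff by blast
  qed
  ultimately show ?thesis by (simp add: compact_eq_bounded_closed)
qed

definition Sbar :: "real \<Rightarrow> real \<Rightarrow> ('n::finite) hyp set" where
  "Sbar C D = {x. fst (fst x)^2 + snd (fst x)^2 \<le> pi^2 \<and> (\<forall>j. \<bar>fst (snd x) $ j\<bar> \<le> C \<and> \<bar>snd (snd x) $ j\<bar> \<le> D)}"

lemma compact_Sbar: "compact (Sbar C D :: ('n::finite) hyp set)"
proof -
  have "Sbar C D = {p::real\<times>real. fst p^2 + snd p^2 \<le> pi^2} \<times>
     (cbox (-(\<chi> j. C)) (\<chi> j. C) \<times> cbox (-(\<chi> j. D)) (\<chi> j. D) :: ((real^'n) \<times> (real^'n)) set)"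
    by (auto simp: Sbar_def mem_box_cart abs_le_iff; smt (verit))
  thus ?thesis by (simp add: compact_Times compact_disk)
qed

lemma inner_bound:
  fixes a s :: "real^'n::finite"
  assumes "\<forall>j. 0 \<le> a $ j" "\<forall>j. \<bar>s $ j\<bar> < C"
  shows "\<bar>a \<bullet> s\<bar> \<le> C * (\<Sum>j\<in>UNIV. a $ j)"
proof -
  have "\<bar>a \<bullet> s\<bar> \<le> (\<Sum>j\<in>UNIV. \<bar>a $ j * s $ j\<bar>)" unfolding inner_vec_def inner_real_def by (rule sum_abs)
  also have "\<dots> \<le> (\<Sum>j\<in>UNIV. a $ j * C)"
    using assms by (intro sum_mono) (metis abs_mult abs_of_nonneg less_imp_le mult_left_mono)
  finally show ?thesis by (simp add: sum_distrib_left mult.commute)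
qed

lemma norm_bound:
  fixes t :: "real^'n::finite"
  assumes "\<forall>j. \<bar>t $ j\<bar> < D"
  shows "norm t < D * sqrt (real CARD('n))"
proof -
  have "(\<Sum>j\<in>UNIV. (t $ j)^2) < (\<Sum>j\<in>(UNIV::'n set). D^2)"
  proof (rule sum_strict_mono)
    fix j :: 'n
    have "\<bar>t $ j\<bar>^2 < D^2" using assms by (intro power_strict_mono) auto
    thus "(t $ j)^2 < D^2" by simp
  qed auto
  hence "norm t < sqrt (real CARD('n) * D^2)"
    by (simp add: norm_vec_def L2_set_def)
  also have "\<dots> = D * sqrt (real CARD('n))"
  proof -
    have "0 \<le> D" using assms[rule_format, of undefined] by simp
    thus ?thesis by (simp add: real_sqrt_mult mult.commute)
  qed
  finally show ?thesis .
qed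



theorem mainTheorem4:
  fixes \<epsilon> \<delta> \<delta>\<^sub>0 C :: real
  assumes "\<epsilon> > 0" and "\<delta> > 0" and "\<delta>\<^sub>0 > 0" and "C > 0"
  shows "\<exists>(U :: ('n::finite) hyp set) (\<iota> :: 'n hyp \<Rightarrow> 'n amb).
     open U \<and> S_C C \<delta> \<subseteq> U \<and> smooth_on U \<iota> \<and>
     (\<forall>x\<in>S_C C \<delta>. inj (frechet_derivative \<iota> (at x))) \<and>
     inj_on (proj_amb \<circ> \<iota>) (S_C C \<delta>) \<and>
     continuous_on ((proj_amb \<circ> \<iota>) ` S_C C \<delta>) (inv_into (S_C C \<delta>) (proj_amb \<circ> \<iota>)) \<and>
     \<iota> ` S_C C \<delta> \<subseteq> target \<delta>\<^sub>0 \<epsilon> \<delta> \<and>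
     (\<forall>x\<in>S_C C \<delta>. \<forall>v. alpha (\<iota> x) (frechet_derivative \<iota> (at x) v) = 0 \<longleftrightarrow> beta x v = 0)"
proof -
  note eps = assms(1) and del = assms(2) and del0 = assms(3) and C0 = assms(4)
  obtain f :: "'n \<Rightarrow> nat" and m where "f ` UNIV = {i. i < m}" and inj: "inj f"
    using finite_imp_inj_to_nat_seg[of "UNIV :: 'n set"] by auto
  define K :: int where "K = \<lceil>C / pi\<rceil>"
  have "C / pi \<le> K" unfolding K_def by (rule le_of_int_ceiling)
  hence CK: "C \<le> pi * K" using pi_gt_zero by (simp add: divide_le_eq mult.commute)
  have K0: "0 \<le> K" using \<open>C / pi \<le> K\<close> C0 pi_gt_zero
    by (metis divide_pos_pos less_le_trans not_le of_int_0_le_iff less_imp_le)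
  define A where "A = (\<Sum>j\<in>(UNIV::'n set). real_of_int (K+1) ^ f j)"
  have A0: "A > 0" unfolding A_def using K0 by (intro sum_pos) auto
  define \<eta> where "\<eta> = min (\<epsilon> / (2 * C * A)) (\<delta> / (4 * A))"
  have eta0: "\<eta> > 0" unfolding \<eta>_def using eps del C0 A0 by simp
  define a :: "real^'n" where "a = (\<chi> j. \<eta> * real_of_int (K+1) ^ f j)"
  have anonneg: "\<forall>j. 0 \<le> a $ j" unfolding a_def using eta0 K0 by simp
  have suma: "(\<Sum>j\<in>UNIV. a $ j) = \<eta> * A" unfolding a_def A_def by (simp add: sum_distrib_left)
  have etaAC: "C * (\<eta> * A) < \<epsilon>"
  proof -
    have "\<eta> \<le> \<epsilon> / (2 * C * A)" unfolding \<eta>_def by simp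
    hence "\<eta> * (2 * C * A) \<le> \<epsilon>" using C0 A0 by (simp add: le_divide_eq)
    thus ?thesis using eps by (simp add: algebra_simps)
  qed
  have etaA: "\<eta> * A < \<delta> / 2"
  proof -
    have "\<eta> \<le> \<delta> / (4 * A)" unfolding \<eta>_def by simp
    hence "\<eta> * (4 * A) \<le> \<delta>" using A0 by (simp add: le_divide_eq)
    thus ?thesis using del by (simp add: algebra_simps)
  qed
  have norma: "norm a < \<delta> / 2"
    using norm_le_l1_cart[of a] anonneg suma etaA by simp
  define F where "F = proj_amb \<circ> iota a"
  define D where "D = \<delta> / (2 * sqrt (real CARD('n)))"
  have SS: "(S_C C \<delta> :: 'n hyp set) \<subseteq> Sbar C D"
    unfolding S_C_def Sbar_def D_def by (auto intro: less_imp_le)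
  have injb: "inj_on F (Sbar C D)"
    unfolding F_def
    by (rule inj_on_subset[OF inj_proj_iota[OF a_def eta0 inj K0 CK]]) (auto simp: Sbar_def)
  have contb: "continuous_on (F ` Sbar C D) (inv_into (Sbar C D) F)"
    by (rule continuous_on_inv[OF continuous_on_subset[OF cont_proj_iota[of a, folded F_def]] compact_Sbar])
       (use injb in auto)
  have cont: "continuous_on (F ` S_C C \<delta>) (inv_into (S_C C \<delta>) F)"
  proof -
    have "continuous_on (F ` S_C C \<delta>) (inv_into (Sbar C D) F)"
      by (rule continuous_on_subset[OF contb]) (use SS in auto)
    moreover have "inv_into (Sbar C D) F y = inv_into (S_C C \<delta>) F y" if yin: "y \<in> F ` S_C C \<delta>" for y
    proof -
      obtain x where x: "x \<in> S_C C \<delta>" "y = F x" using yin by blast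
      have "inv_into (Sbar C D) F y = x" using x SS injb by (auto intro: inv_into_f_f)
      moreover have "inv_into (S_C C \<delta>) F y = x"
        using x inj_on_subset[OF injb SS] by (auto intro: inv_into_f_f)
      ultimately show ?thesis by simp
    qed
    ultimately show ?thesis using continuous_on_cong by blast
  qed
  have targ: "iota a ` S_C C \<delta> \<subseteq> target \<delta>\<^sub>0 \<epsilon> \<delta>"
  proof
    fix y assume "y \<in> iota a ` S_C C \<delta>"
    then obtain x where x: "x \<in> S_C C \<delta>" "y = iota a x" by blast
    obtain u w s t where xx: "x = ((u,w),(s,t))" by (metis prod.collapse)
    have h1: "u^2 + w^2 \<le> pi^2" and hs: "\<forall>j. \<bar>s $ j\<bar> < C" and ht: "\<forall>j. \<bar>t $ j\<bar> < \<delta> / (2 * sqrt (real CARD('n)))"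
      using x(1) unfolding xx S_C_def by auto
    have "pi^2 < (pi + \<delta>\<^sub>0)^2" using del0 pi_gt_zero by (intro power_strict_mono) auto
    hence r1: "u^2 + w^2 < (pi + \<delta>\<^sub>0)^2" using h1 by linarith
    have r2: "\<bar>a \<bullet> s\<bar> < \<epsilon>" using inner_bound[OF anonneg hs] suma etaAC by simp
    have nt: "norm t < \<delta> / 2"
    proof -
      have "norm t < \<delta> / (2 * sqrt (real CARD('n))) * sqrt (real CARD('n))" by (rule norm_bound[OF ht])
      also have "\<dots> = \<delta> / 2" by simp
      finally show ?thesis .
    qed
    have c: "\<bar>Cm 0 (rho x)\<bar> \<le> 1"
    proof -
      have "Cm 0 (rho x) = cos (sqrt (rho x))" by (rule C0_cos) (simp add: rho_def)
      thus ?thesis by simp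
    qed
    have "norm (t + Cm 0 (rho x) *\<^sub>R a) \<le> norm t + \<bar>Cm 0 (rho x)\<bar> * norm a"
      using norm_triangle_ineq[of t "Cm 0 (rho x) *\<^sub>R a"] by simp
    also have "\<dots> \<le> norm t + norm a" using c by (simp add: mult_left_le_one_le)
    also have "\<dots> < \<delta>" using nt norma by simp
    finally have r3: "norm (t + Cm 0 (rho x) *\<^sub>R a) < \<delta>" .
    show "y \<in> target \<delta>\<^sub>0 \<epsilon> \<delta>"
      using r1 r2 r3 unfolding x(2) xx by (simp add: target_def iota_def)
  qed
  show ?thesis
    apply (rule exI[of _ UNIV], rule exI[of _ "iota a"])
    using iota_smooth[of a] iota_fd_inj[of a] inj_on_subset[OF injb SS] cont targ iota_alpha[of a]
    unfolding F_def by auto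
qed


end
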